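(* Let $k\ge 3$ be odd and let $G$ be the $k$-uniform sunflower, with Laplacian tensor $\mathcal L$. Then $\lambda(\mathcal L)=2$.
   Context: A $k$-uniform hypergraph $G=(V,E)$ has vertex set $V=[n]$ and a nonempty set $E$ of $k$-element subsets of $V$; $d_i$ is the number of edges containing $i$. The $k$-uniform sunflower has vertex set $\{i_{j,s}: j\in[k-1], s\in[k]\}\cup\{i_k\}$ (all distinct) and edges $\{i_{j,1},\ldots,i_{j,k}\}$ for $j\in[k-1]$ together with $\{i_{1,1},\ldots,i_{k-1,1},i_k\}$. The Laplacian tensor $\mathcal L$ of $G$ acts by $(\mathcal L\mathbf x^{k-1})_i=d_ix_i^{k-1}-\sum_{e\in E,\,i\in e}\prod_{s\in e\setminus\{i\}}x_s$ (it is $\mathcal D-\mathcal A$ with $\mathcal D$ the diagonal degree tensor and $\mathcal A$ the adjacency tensor with entries $\frac1{(k-1)!}$ on edges). A real $\lambda$ is an H-eigenvalue of $\mathcal L$ if some nonzero $\mathbf x\in\mathbb R^n$ satisfies $(\mathcal L\mathbf x^{k-1})_i=\lambda x_i^{k-1}$ for all $i$; $\lambda(\mathcal L)$ is the largest H-eigenvalue. *)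

theory Defs
  imports Complex_Main
begin

definition degree :: "nat set set \<Rightarrow> nat \<Rightarrow> nat" where
  "degree E i = card {e \<in> E. i \<in> e}"

text \<open>(L x^(k-1))_i for the Laplacian tensor L = D - A of a k-uniform hypergraph.\<close>
definition lap_apply :: "nat \<Rightarrow> nat set set \<Rightarrow> (nat \<Rightarrow> real) \<Rightarrow> nat \<Rightarrow> real" where
  "lap_apply k E x i =
     real (degree E i) * x i ^ (k - 1) - (\<Sum>e\<in>{e \<in> E. i \<in> e}. \<Prod>s\<in>e - {i}. x s)"

definition is_H_eigenvalue :: "nat \<Rightarrow> nat \<Rightarrow> nat set set \<Rightarrow> real \<Rightarrow> bool" where
  "is_H_eigenvalue n k E lam \<longleftrightarrow>
     (\<exists>x :: nat \<Rightarrow> real. (\<exists>i\<in>{1..n}. x i \<noteq> 0) \<and>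
        (\<forall>i\<in>{1..n}. lap_apply k E x i = lam * x i ^ (k - 1)))"

definition is_largest_H_eigenvalue :: "nat \<Rightarrow> nat \<Rightarrow> nat set set \<Rightarrow> real \<Rightarrow> bool" where
  "is_largest_H_eigenvalue n k E lam \<longleftrightarrow>
     is_H_eigenvalue n k E lam \<and> (\<forall>mu. is_H_eigenvalue n k E mu \<longrightarrow> mu \<le> lam)"

definition sunflower_edges :: "nat \<Rightarrow> (nat \<Rightarrow> nat \<Rightarrow> nat) \<Rightarrow> nat \<Rightarrow> nat set set" where
  "sunflower_edges k idx c =
     {idx j ` {1..k} | j. j \<in> {1..k-1}} \<union> {insert c ((\<lambda>j. idx j 1) ` {1..k-1})}"

end

theory Submission
  imports Defs
begin

context
  fixes k c :: nat and idx :: "nat \<Rightarrow> nat \<Rightarrow> nat"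
  assumes k3: "k \<ge> 3"
    and inj: "inj_on (\<lambda>(j, s). idx j s) ({1..k-1} \<times> {1..k})"
    and cn: "c \<notin> (\<lambda>(j, s). idx j s) ` ({1..k-1} \<times> {1..k})"
begin

lemma idx_eq: "j\<in>{1..k-1} \<Longrightarrow> s\<in>{1..k} \<Longrightarrow> j'\<in>{1..k-1} \<Longrightarrow> s'\<in>{1..k} \<Longrightarrow>
   idx j s = idx j' s' \<longleftrightarrow> j = j' \<and> s = s'"
proof
  assume m: "j\<in>{1..k-1}" "s\<in>{1..k}" "j'\<in>{1..k-1}" "s'\<in>{1..k}" and e: "idx j s = idx j' s'"
  have "(j, s) = (j', s')"
    by (rule inj_onD[OF inj]) (use m e in auto)
  thus "j = j' \<and> s = s'" by simp
qed simp

lemma c_neq: "j\<in>{1..k-1} \<Longrightarrow> s\<in>{1..k} \<Longrightarrow> idx j s \<noteq> c"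
  using cn by force

lemma c_notin_petal: "j\<in>{1..k-1} \<Longrightarrow> c \<notin> idx j ` {1..k}"
  using c_neq by blast

lemma c_notin_roots: "c \<notin> (\<lambda>i. idx i 1) ` A" if "A \<subseteq> {1..k-1}"
proof
  assume "c \<in> (\<lambda>i. idx i 1) ` A"
  then obtain i where "i \<in> A" "c = idx i 1" by blast
  with that c_neq[of i 1] k3 show False by auto
qed

lemma in_petal: "j\<in>{1..k-1} \<Longrightarrow> s\<in>{1..k} \<Longrightarrow> j'\<in>{1..k-1} \<Longrightarrow>
   idx j s \<in> idx j' ` {1..k} \<longleftrightarrow> j' = j"
proof
  assume a: "j\<in>{1..k-1}" "s\<in>{1..k}" "j'\<in>{1..k-1}" "idx j s \<in> idx j' ` {1..k}"
  then obtain t where "t\<in>{1..k}" "idx j s = idx j' t" by blast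
  with a idx_eq show "j' = j" by blast
qed auto

lemma in_roots: "j\<in>{1..k-1} \<Longrightarrow> s\<in>{1..k} \<Longrightarrow>
   idx j s \<in> (\<lambda>i. idx i 1) ` {1..k-1} \<longleftrightarrow> s = 1"
proof
  assume a: "j\<in>{1..k-1}" "s\<in>{1..k}" "idx j s \<in> (\<lambda>i. idx i 1) ` {1..k-1}"
  then obtain i where "i\<in>{1..k-1}" "idx j s = idx i 1" by blast
  with a idx_eq[of j s i 1] k3 show "s = 1" by auto
qed auto

definition "C = insert c ((\<lambda>j. idx j 1) ` {1..k-1})"

lemma edges_eq: "sunflower_edges k idx c = (\<lambda>j. idx j ` {1..k}) ` {1..k-1} \<union> {C}"
  unfolding sunflower_edges_def C_def by auto

lemma filt: "{e\<in>sunflower_edges k idx c. v \<in> e} =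
   (\<lambda>j. idx j ` {1..k}) ` {j'\<in>{1..k-1}. v \<in> idx j' ` {1..k}} \<union> {e\<in>{C}. v \<in> e}"
  unfolding edges_eq by auto

lemma edges_leaf: assumes j: "j\<in>{1..k-1}" and s: "s\<in>{2..k}"
  shows "{e\<in>sunflower_edges k idx c. idx j s \<in> e} = {idx j ` {1..k}}"
proof -
  have s1: "s \<in> {1..k}" "s \<noteq> 1" using s by auto
  have "idx j s \<notin> C" unfolding C_def using in_roots[OF j s1(1)] c_neq[OF j s1(1)] s1 by auto
  hence B1: "{e\<in>{C}. idx j s \<in> e} = {}" by auto
  have A1: "{j'\<in>{1..k-1}. idx j s \<in> idx j' ` {1..k}} = {j}"
    using in_petal[OF j s1(1)] j by auto
  show ?thesis unfolding filt A1 B1 by simp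
qed

lemma edges_root: assumes j: "j\<in>{1..k-1}"
  shows "{e\<in>sunflower_edges k idx c. idx j 1 \<in> e} = {idx j ` {1..k}, C}"
proof -
  have s1: "1 \<in> {1..k}" using k3 by auto
  have "idx j 1 \<in> C" unfolding C_def using in_roots[OF j s1] by auto
  hence "{e\<in>{C}. idx j 1 \<in> e} = {C}" by auto
  moreover have "{j'\<in>{1..k-1}. idx j 1 \<in> idx j' ` {1..k}} = {j}"
    using in_petal[OF j s1] j by auto
  ultimately show ?thesis unfolding filt by auto
qed

lemma edges_c: "{e\<in>sunflower_edges k idx c. c \<in> e} = {C}"
proof -
  have "{j'\<in>{1..k-1}. c \<in> idx j' ` {1..k}} = {}" using c_notin_petal by auto
  moreover have "c \<in> C" unfolding C_def by auto
  ultimately show ?thesis unfolding filt by auto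
qed

lemma prod_petal: assumes j: "j\<in>{1..k-1}" and s: "s\<in>{1..k}"
  shows "(\<Prod>v\<in>idx j ` {1..k} - {idx j s}. x v) = (\<Prod>t\<in>{1..k}-{s}. x (idx j t))"
proof -
  have inj1: "inj_on (idx j) {1..k}" using j idx_eq unfolding inj_on_def by blast
  have "idx j ` {1..k} - {idx j s} = idx j ` ({1..k} - {s})"
    using inj_on_image_set_diff[OF inj1, of "{1..k}" "{s}"] s by simp
  moreover have "inj_on (idx j) ({1..k} - {s})" using inj1 by (rule inj_on_subset) auto
  ultimately show ?thesis by (simp add: prod.reindex)
qed

lemma inj_root: "inj_on (\<lambda>i. idx i 1) {1..k-1}"
  unfolding inj_on_def
proof (intro ballI impI)
  fix a b assume "a \<in> {1..k-1}" "b \<in> {1..k-1}" "idx a 1 = idx b 1"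
  with idx_eq[of a 1 b 1] k3 show "a = b" by auto
qed

lemma prod_center_root: assumes j: "j\<in>{1..k-1}"
  shows "(\<Prod>v\<in>C - {idx j 1}. x v) = x c * (\<Prod>i\<in>{1..k-1}-{j}. x (idx i 1))"
proof -
  have cj: "idx j 1 \<noteq> c" using c_neq[OF j, of 1] k3 by auto
  have "C - {idx j 1} = insert c ((\<lambda>i. idx i 1) ` ({1..k-1} - {j}))"
  proof -
    have "(\<lambda>i. idx i 1) ` ({1..k-1} - {j}) = (\<lambda>i. idx i 1) ` {1..k-1} - {idx j 1}"
      using inj_on_image_set_diff[OF inj_root, of "{1..k-1}" "{j}"] j by simp
    thus ?thesis unfolding C_def using cj by (simp add: insert_Diff_if)
  qed
  moreover have "c \<notin> (\<lambda>i. idx i 1) ` ({1..k-1} - {j})" by (rule c_notin_roots) auto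
  moreover have "inj_on (\<lambda>i. idx i 1) ({1..k-1} - {j})" using inj_root by (rule inj_on_subset) auto
  ultimately show ?thesis by (simp add: prod.reindex)
qed

lemma prod_center_c:
  shows "(\<Prod>v\<in>C - {c}. x v) = (\<Prod>i\<in>{1..k-1}. x (idx i 1))"
proof -
  have "C - {c} = (\<lambda>i. idx i 1) ` {1..k-1}"
    unfolding C_def using c_notin_roots[of "{1..k-1}"] by auto
  then show ?thesis using inj_root by (simp add: prod.reindex)
qed

lemma lap_leaf: assumes j: "j\<in>{1..k-1}" and s: "s\<in>{2..k}"
  shows "lap_apply k (sunflower_edges k idx c) x (idx j s) = x (idx j s)^(k-1) - (\<Prod>t\<in>{1..k}-{s}. x (idx j t))"
proof -
  have s1: "s \<in> {1..k}" using s by auto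
  show ?thesis
  unfolding lap_apply_def degree_def edges_leaf[OF j s] using prod_petal[OF j s1] by simp
qed

lemma lap_root: assumes j: "j\<in>{1..k-1}"
  shows "lap_apply k (sunflower_edges k idx c) x (idx j 1) = 2 * x (idx j 1)^(k-1) - (\<Prod>t\<in>{2..k}. x (idx j t))
     - x c * (\<Prod>i\<in>{1..k-1}-{j}. x (idx i 1))"
proof -
  have ne: "idx j ` {1..k} \<noteq> C"
    using c_notin_petal[OF j] unfolding C_def by auto
  have e: "{1..k} - {1} = {2..k}" by auto
  have s1: "1 \<in> {1..k}" using k3 by auto
  have p1: "(\<Prod>v\<in>idx j ` {1..k} - {idx j 1}. x v) = (\<Prod>t\<in>{2..k}. x (idx j t))"
    using prod_petal[OF j s1, of x] e by simp
  have "lap_apply k (sunflower_edges k idx c) x (idx j 1) = 2 * x (idx j 1)^(k-1)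
     - ((\<Prod>v\<in>idx j ` {1..k} - {idx j 1}. x v) + (\<Prod>v\<in>C - {idx j 1}. x v))"
    unfolding lap_apply_def degree_def edges_root[OF j] using ne by simp
  also have "\<dots> = 2 * x (idx j 1)^(k-1) - ((\<Prod>t\<in>{2..k}. x (idx j t)) + x c * (\<Prod>i\<in>{1..k-1}-{j}. x (idx i 1)))"
    by (simp only: p1 prod_center_root[OF j])
  finally show ?thesis by simp
qed

lemma lap_c: "lap_apply k (sunflower_edges k idx c) x c = x c^(k-1) - (\<Prod>i\<in>{1..k-1}. x (idx i 1))"
  unfolding lap_apply_def degree_def edges_c using prod_center_c by simp


lemma vertex_cases:
  assumes "v \<in> insert c ((\<lambda>(j, s). idx j s) ` ({1..k-1} \<times> {1..k}))"
    and "v = c \<Longrightarrow> P"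
    and "\<And>j. j\<in>{1..k-1} \<Longrightarrow> v = idx j 1 \<Longrightarrow> P"
    and "\<And>j s. j\<in>{1..k-1} \<Longrightarrow> s\<in>{2..k} \<Longrightarrow> v = idx j s \<Longrightarrow> P"
  shows P
proof -
  consider "v = c" | j s where "j\<in>{1..k-1}" "s\<in>{1..k}" "v = idx j s" using assms(1) by auto
  then show P
  proof cases
    case 1 then show ?thesis by (rule assms(2))
  next
    case (2 j s)
    show ?thesis
    proof (cases "s = 1")
      case True then show ?thesis using 2 assms(3) by blast
    next
      case False then have "s\<in>{2..k}" using 2 by auto
      then show ?thesis using 2 assms(4) by blast
    qed
  qed
qed

end

lemma alg:
  fixes y :: "nat \<Rightarrow> nat \<Rightarrow> real" and d L :: real and k :: nat
  assumes k3: "k \<ge> 3" and ko: "odd k" and L: "L > 2"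
  and E1: "\<forall>j\<in>{1..k-1}. \<forall>s\<in>{2..k}. y j s^(k-1) - (\<Prod>t\<in>{1..k}-{s}. y j t) = L * y j s^(k-1)"
  and E2: "\<forall>j\<in>{1..k-1}. 2 * y j 1^(k-1) - (\<Prod>t\<in>{2..k}. y j t) - d * (\<Prod>i\<in>{1..k-1}-{j}. y i 1) = L * y j 1^(k-1)"
  and E3: "d^(k-1) - (\<Prod>i\<in>{1..k-1}. y i 1) = L * d^(k-1)"
  shows "d = 0 \<and> (\<forall>j\<in>{1..k-1}. \<forall>t\<in>{1..k}. y j t = 0)"
proof -
  have ke: "even (k-1)" using ko k3 by simp
  have kS: "k = Suc (k-1)" using k3 by simp
  have K1: "\<And>s. s \<in> {2..k} \<Longrightarrow> {1..k} - {s} = insert 1 ({2..k} - {s})" by auto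
  have step1: "(1-L) * y j s^k = y j 1 * (\<Prod>t\<in>{2..k}. y j t)"
    if j: "j\<in>{1..k-1}" and s: "s\<in>{2..k}" for j s
  proof -
    have "(1-L) * y j s^(k-1) = (\<Prod>t\<in>{1..k}-{s}. y j t)" using E1 j s by (simp add: algebra_simps)
    also have "\<dots> = y j 1 * (\<Prod>t\<in>{2..k}-{s}. y j t)" using K1[OF s] by simp
    finally have "(1-L) * y j s^(k-1) * y j s = y j 1 * ((\<Prod>t\<in>{2..k}-{s}. y j t) * y j s)" by simp
    also have "(\<Prod>t\<in>{2..k}-{s}. y j t) * y j s = (\<Prod>t\<in>{2..k}. y j t)"
      using prod.remove[of "{2..k}" s "y j"] s by (simp add: mult.commute)
    finally show ?thesis by (subst kS, simp add: algebra_simps)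
  qed
  have Pnn: "0 \<le> (\<Prod>t\<in>{2..k}. y j t)" if j: "j\<in>{1..k-1}" for j
  proof -
    have two: "2 \<in> {2..k}" using k3 by auto
    have eq: "y j s^k = y j 2^k" if s: "s\<in>{2..k}" for s
    proof -
      have "(1-L) * y j s^k = (1-L) * y j 2^k" using step1[OF j s] step1[OF j two] by simp
      moreover have "1 - L \<noteq> 0" using L by simp
      ultimately show ?thesis by simp
    qed
    have "(\<Prod>t\<in>{2..k}. y j t)^k = (\<Prod>t\<in>{2..k}. y j t^k)" by (rule prod_power_distrib)
    also have "\<dots> = (\<Prod>t\<in>{2..k}. y j 2^k)" by (rule prod.cong[OF refl]) (rule eq)
    also have "\<dots> = (y j 2^k)^(k-1)" by simp
    finally have "0 \<le> (\<Prod>t\<in>{2..k}. y j t)^k" using zero_le_even_power[OF ke] by metis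
    thus ?thesis using ko by (simp add: zero_le_power_eq)
  qed
  have J1: "\<And>j. j\<in>{1..k-1} \<Longrightarrow> {1..k-1} = insert j ({1..k-1} - {j})" by auto
  have E3d: "(1-L) * d^k = d * (\<Prod>i\<in>{1..k-1}. y i 1)"
  proof -
    have "(1-L) * d^(k-1) = (\<Prod>i\<in>{1..k-1}. y i 1)" using E3 by (simp add: algebra_simps)
    hence "(1-L) * d^(k-1) * d = (\<Prod>i\<in>{1..k-1}. y i 1) * d" by simp
    thus ?thesis by (subst kS, simp add: algebra_simps)
  qed
  have step3: "0 \<le> y j 1 * d^k \<and> (y j 1 \<noteq> 0 \<longrightarrow> 0 < y j 1 * d^k)" if j: "j\<in>{1..k-1}" for j
  proof -
    define a where "a = y j 1"
    define P where "P = (\<Prod>t\<in>{2..k}. y j t)"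
    have P0: "0 \<le> P" using Pnn[OF j] P_def by simp
    have "(2-L) * a^(k-1) = P + d * (\<Prod>i\<in>{1..k-1}-{j}. y i 1)"
      using E2 j unfolding a_def P_def by (simp add: algebra_simps)
    hence "(2-L) * a^(k-1) * a = P * a + d * (a * (\<Prod>i\<in>{1..k-1}-{j}. y i 1))"
      by (simp add: algebra_simps)
    also have "a * (\<Prod>i\<in>{1..k-1}-{j}. y i 1) = (\<Prod>i\<in>{1..k-1}. y i 1)"
      using prod.remove[of "{1..k-1}" j "\<lambda>i. y i 1"] j a_def by simp
    finally have "(2-L) * a^k = P * a + (1-L) * d^k"
      using E3d by (subst kS, simp add: algebra_simps)
    hence h: "(2-L) * a^k * a = (P * a + (1-L) * d^k) * a" by simp
    have "a^(k+1) = a^k * a" by simp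
    with h have eq: "(L-1) * (a * d^k) = P * (a*a) + (L-2) * a^(k+1)" by (simp add: algebra_simps)
    have ev: "even (k+1)" using ko by simp
    have r1: "0 \<le> P * (a*a)" using P0 by simp
    have r2: "0 \<le> (L-2) * a^(k+1)" using L zero_le_even_power[OF ev, of a] by (intro mult_nonneg_nonneg) auto
    have r3: "0 < (L-2) * a^(k+1)" if an: "a \<noteq> 0"
    proof -
      have "0 < a^(k+1)" using ev an by (simp only: zero_less_power_eq) simp
      thus ?thesis using L by (intro mult_pos_pos) auto
    qed
    have "0 \<le> (L-1) * (a * d^k)" using eq r1 r2 by simp
    hence g1: "0 \<le> a * d^k" using L by (simp add: zero_le_mult_iff)
    have "a \<noteq> 0 \<Longrightarrow> 0 < (L-1) * (a * d^k)" using eq r1 r3 by simp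
    hence "a \<noteq> 0 \<Longrightarrow> 0 < a * d^k" using L by (simp add: zero_less_mult_iff)
    thus ?thesis using g1 a_def by simp
  qed
  have allz: "\<forall>j\<in>{1..k-1}. y j 1 = 0"
  proof (rule ccontr)
    assume "\<not> ?thesis"
    then obtain j where j: "j\<in>{1..k-1}" "y j 1 \<noteq> 0" by blast
    have "0 < y j 1 * d^k" using step3 j by blast
    hence d0: "d \<noteq> 0" using k3 by (auto simp: power_0_left)
    have "0 \<le> (\<Prod>i\<in>{1..k-1}. y i 1 * d^k)" using step3 by (intro prod_nonneg) blast
    also have "\<dots> = (\<Prod>i\<in>{1..k-1}. y i 1) * (d^k)^(k-1)" by (simp add: prod.distrib)
    finally have A: "0 \<le> (\<Prod>i\<in>{1..k-1}. y i 1) * (d^k)^(k-1)" .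
    have pos: "0 < (d^k)^(k-1)" using ke d0 k3 by (simp add: zero_less_power_eq)
    have "0 \<le> (\<Prod>i\<in>{1..k-1}. y i 1)" using A pos by (simp add: zero_le_mult_iff)
    moreover have "(\<Prod>i\<in>{1..k-1}. y i 1) = (1-L) * d^(k-1)" using E3 by (simp add: algebra_simps)
    moreover have "0 < d^(k-1)" using ke d0 k3 by (simp add: zero_less_power_eq)
    ultimately show False using L by (simp add: mult_le_0_iff zero_le_mult_iff)
  qed
  have one: "1 \<in> {1..k-1}" using k3 by auto
  have pz: "(\<Prod>i\<in>{1..k-1}. y i 1) = 0" using allz one by (auto intro: prod_zero)
  have "(1-L) * d^(k-1) = (\<Prod>i\<in>{1..k-1}. y i 1)" using E3 by (simp add: algebra_simps)
  also note pz
  finally have "(1-L) * d^(k-1) = 0" .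
  hence dz: "d = 0" using L by simp
  have bz: "y j s = 0" if j: "j\<in>{1..k-1}" and s: "s\<in>{2..k}" for j s
  proof -
    have "(1-L) * y j s^(k-1) = (\<Prod>t\<in>{1..k}-{s}. y j t)" using E1 j s by (simp add: algebra_simps)
    also have "\<dots> = 0" using allz j s k3 by (intro prod_zero bexI[of _ 1]) auto
    finally show ?thesis using L by simp
  qed
  have "\<forall>j\<in>{1..k-1}. \<forall>t\<in>{1..k}. y j t = 0"
  proof (intro ballI)
    fix j t assume "j\<in>{1..k-1}" "t\<in>{1..k}"
    thus "y j t = 0" using allz bz by (cases "t = 1") auto
  qed
  with dz show ?thesis by simp
qed

theorem proposition3p5:
  fixes k n c :: nat and idx :: "nat \<Rightarrow> nat \<Rightarrow> nat"
  assumes "k \<ge> 3" and "odd k"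
    and "inj_on (\<lambda>(j, s). idx j s) ({1..k-1} \<times> {1..k})"
    and "c \<notin> (\<lambda>(j, s). idx j s) ` ({1..k-1} \<times> {1..k})"
    and "{1..n} = insert c ((\<lambda>(j, s). idx j s) ` ({1..k-1} \<times> {1..k}))"
  shows "is_largest_H_eigenvalue n k (sunflower_edges k idx c) 2"
proof -
  note A = assms(1) assms(3) assms(4)
  note idx_eq' = idx_eq[OF A]
  note c_neq' = c_neq[OF A]
  note lap_leaf' = lap_leaf[OF A]
  note lap_root' = lap_root[OF A]
  note lap_c' = lap_c[OF A]
  note vc = vertex_cases[OF A]
  have k3: "k \<ge> 3" by (rule assms(1))
  have J1: "1 \<in> {1..k-1}" "2 \<in> {1..k-1}" using k3 by auto
  have K1: "1 \<in> {1..k}" using k3 by auto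
  define x0 :: "nat \<Rightarrow> real" where "x0 = (\<lambda>v. if v = idx 1 1 then 1 else 0)"
  have x0_other: "x0 (idx j t) = 0" if "j\<in>{1..k-1}" "t\<in>{1..k}" "t \<noteq> 1" for j t
    using idx_eq'[OF that(1,2) J1(1) K1] that(3) unfolding x0_def by auto
  have x0_c: "x0 c = 0" using c_neq'[OF J1(1) K1] unfolding x0_def by auto
  have kpos: "k - 1 \<noteq> 0" using k3 by simp
  have ev2: "is_H_eigenvalue n k (sunflower_edges k idx c) 2"
    unfolding is_H_eigenvalue_def
  proof (intro exI conjI)
    show "\<exists>i\<in>{1..n}. x0 i \<noteq> 0"
      using assms(5) J1 K1 unfolding x0_def by (intro bexI[of _ "idx 1 1"]) force+
    show "\<forall>i\<in>{1..n}. lap_apply k (sunflower_edges k idx c) x0 i = 2 * x0 i ^ (k - 1)"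
    proof
      fix i assume "i \<in> {1..n}"
      then have iv: "i \<in> insert c ((\<lambda>(j, s). idx j s) ` ({1..k-1} \<times> {1..k}))" by (simp only: assms(5))
      show "lap_apply k (sunflower_edges k idx c) x0 i = 2 * x0 i ^ (k - 1)"
      proof (rule vc[OF iv])
        assume ic: "i = c"
        have "(\<Prod>i\<in>{1..k-1}. x0 (idx i 1)) = 0"
        proof (rule prod_zero)
          show "\<exists>a\<in>{1..k-1}. x0 (idx a 1) = 0"
          proof (rule bexI[OF _ J1(2)])
            show "x0 (idx 2 1) = 0" using idx_eq'[OF J1(2) K1 J1(1) K1] unfolding x0_def by auto
          qed
        qed simp
        then have P0: "(\<Prod>i\<in>{1..k-1}. x0 (idx i 1)) = 0" .
        have z: "(0::real)^(k-1) = 0" using kpos by simp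
        show ?thesis unfolding ic lap_c'[of x0] x0_c P0 z by simp
      next
        fix j assume j: "j\<in>{1..k-1}" and ij: "i = idx j 1"
        have "(\<Prod>t\<in>{2..k}. x0 (idx j t)) = 0"
          using x0_other[OF j, of 2] k3 by (intro prod_zero bexI[of _ 2]) auto
        then show ?thesis using lap_root'[OF j, of x0] ij x0_c by simp
      next
        fix j s assume j: "j\<in>{1..k-1}" and s: "s\<in>{2..k}" and ij: "i = idx j s"
        define t where "t = (if s = 2 then 3 else 2::nat)"
        have t: "t \<in> {1..k} - {s}" "t \<noteq> 1" using s k3 unfolding t_def by auto
        have P0: "(\<Prod>t\<in>{1..k}-{s}. x0 (idx j t)) = 0"
          using x0_other[OF j, of t] t by (intro prod_zero bexI[of _ t]) auto
        have X0: "x0 (idx j s) = 0" using x0_other[OF j, of s] s by auto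
        have z: "(0::real)^(k-1) = 0" using kpos by simp
        show ?thesis unfolding ij lap_leaf'[OF j s, of x0] X0 P0 z by simp
      qed
    qed
  qed
  have le2: "mu \<le> 2" if mu: "is_H_eigenvalue n k (sunflower_edges k idx c) mu" for mu
  proof (rule ccontr)
    assume "\<not> mu \<le> 2"
    hence L: "mu > 2" by simp
    from mu obtain x where nz: "\<exists>i\<in>{1..n}. x i \<noteq> 0"
      and eq: "\<forall>i\<in>{1..n}. lap_apply k (sunflower_edges k idx c) x i = mu * x i ^ (k - 1)"
      unfolding is_H_eigenvalue_def by blast
    have memb: "idx j s \<in> {1..n}" if "j\<in>{1..k-1}" "s\<in>{1..k}" for j s
      using assms(5) that by auto
    have cm: "c \<in> {1..n}" using assms(5) by auto
    have E1: "\<forall>j\<in>{1..k-1}. \<forall>s\<in>{2..k}. x (idx j s)^(k-1) - (\<Prod>t\<in>{1..k}-{s}. x (idx j t)) = mu * x (idx j s)^(k-1)"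
    proof (intro ballI)
      fix j s assume j: "j\<in>{1..k-1}" and s: "s\<in>{2..k}"
      have "idx j s \<in> {1..n}" using memb[OF j] s by auto
      then show "x (idx j s)^(k-1) - (\<Prod>t\<in>{1..k}-{s}. x (idx j t)) = mu * x (idx j s)^(k-1)"
        using eq lap_leaf'[OF j s, of x] by simp
    qed
    have E2: "\<forall>j\<in>{1..k-1}. 2 * x (idx j 1)^(k-1) - (\<Prod>t\<in>{2..k}. x (idx j t)) - x c * (\<Prod>i\<in>{1..k-1}-{j}. x (idx i 1)) = mu * x (idx j 1)^(k-1)"
    proof (intro ballI)
      fix j assume j: "j\<in>{1..k-1}"
      have "idx j 1 \<in> {1..n}" using memb[OF j K1] .
      then show "2 * x (idx j 1)^(k-1) - (\<Prod>t\<in>{2..k}. x (idx j t)) - x c * (\<Prod>i\<in>{1..k-1}-{j}. x (idx i 1)) = mu * x (idx j 1)^(k-1)"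
        using eq lap_root'[OF j, of x] by simp
    qed
    have E3: "x c^(k-1) - (\<Prod>i\<in>{1..k-1}. x (idx i 1)) = mu * x c^(k-1)"
      using eq cm lap_c'[of x] by simp
    have Z: "x c = 0 \<and> (\<forall>j\<in>{1..k-1}. \<forall>t\<in>{1..k}. x (idx j t) = 0)"
      by (rule alg[OF assms(1) assms(2) L E1 E2 E3])
    from nz obtain i where i: "i\<in>{1..n}" "x i \<noteq> 0" by blast
    have iv: "i \<in> insert c ((\<lambda>(j, s). idx j s) ` ({1..k-1} \<times> {1..k}))" using i(1) by (simp only: assms(5))
    show False
    proof (rule vc[OF iv])
      assume "i = c" then show False using Z i by simp
    next
      fix j assume "j\<in>{1..k-1}" "i = idx j 1" then show False using Z i K1 by auto
    next
      fix j s assume "j\<in>{1..k-1}" "s\<in>{2..k}" "i = idx j s" then show False using Z i by auto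
    qed
  qed
  show ?thesis unfolding is_largest_H_eigenvalue_def using ev2 le2 by blast
qed

end
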